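(* There exist binary-input discrete memoryless channels $W$ and $V$ with a common finite output alphabet $\mathcal{Y}$, both symmetrized by the same involutive permutation of $\mathcal{Y}$, such that $$C(W^+,V^+)+C(W^-,V^-) > 2\,C(W,V).$$
   Context: A binary-input discrete memoryless channel (B-DMC) $W:\{0,1\}\to\mathcal{Y}$ is given by transition probabilities $W(y|x)$. Two B-DMCs $W,V$ with the same output alphabet are symmetrized by the same permutation if there is a permutation $\pi$ of $\mathcal{Y}$ with $\pi=\pi^{-1}$ such that $W(y|0)=W(\pi(y)|1)$ and $V(y|0)=V(\pi(y)|1)$ for all $y$. Mismatched capacity: for B-DMCs $W,V$ with the same output alphabet, $C(W,V)$ is the supremum of rates $R$ such that for every $\epsilon>0$ and all sufficiently large $n$ there is a codebook $\{\mathbf{x}(1),\dots,\mathbf{x}(M)\}\subset\{0,1\}^n$ with $\frac{\log M}{n}>R$ whose maximal error probability over the memoryless channel $W$ is less than $\epsilon$ when decoded with the mismatched decoder for $V$: on receiving $\mathbf{y}$ it outputs the unique $i$ with $\prod_k V(y_k|x_k(i)) > \prod_k V(y_k|x_k(j))$ for all $j\ne i$ (i.e. $d(\mathbf x(i),\mathbf y)<d(\mathbf x(j),\mathbf y)$ for the additive metric $d(x,y)=-\log V(y|x)$), and declares an erasure (error) if no such $i$ exists. Polar transforms: from a B-DMC $W:\{0,1\}\to\mathcal{Y}$ one defines $W^-:\{0,1\}\to\mathcal{Y}^2$ and $W^+:\{0,1\}\to\mathcal{Y}^2\times\mathbb{F}_2$ by $W^-(y_1y_2|u_1)=\sum_{u_2\in\mathbb{F}_2}\tfrac12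 W(y_1|u_1\oplus u_2)W(y_2|u_2)$ and $W^+(y_1y_2u_1|u_2)=\tfrac12 W(y_1|u_1\oplus u_2)W(y_2|u_2)$; $V^\pm$ are defined in the same way from $V$. *)

theory Defs
  imports Complex_Main
begin

type_synonym 'y bchannel = "bool \<Rightarrow> 'y \<Rightarrow> real"
  \<comment> \<open>W x y = W(y|x); input 0 = False, 1 = True\<close>

definition bdmc :: "'y set \<Rightarrow> 'y bchannel \<Rightarrow> bool" where
  "bdmc Y W \<longleftrightarrow> finite Y \<and> (\<forall>x y. 0 \<le> W x y) \<and> (\<forall>x. (\<Sum>y\<in>Y. W x y) = 1)
     \<and> (\<forall>x y. y \<notin> Y \<longrightarrow> W x y = 0)"

definition sym_by :: "'y set \<Rightarrow> ('y \<Rightarrow> 'y) \<Rightarrow> 'y bchannel \<Rightarrow> bool" where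
  "sym_by Y \<pi> W \<longleftrightarrow> (\<forall>y\<in>Y. \<pi> y \<in> Y \<and> \<pi> (\<pi> y) = y \<and> W False y = W True (\<pi> y))"

definition chprod :: "'y bchannel \<Rightarrow> bool list \<Rightarrow> 'y list \<Rightarrow> real" where
  "chprod W xs ys = (\<Prod>k<length xs. W (xs ! k) (ys ! k))"

definition decodes_to :: "'y bchannel \<Rightarrow> nat \<Rightarrow> (nat \<Rightarrow> bool list) \<Rightarrow> 'y list \<Rightarrow> nat \<Rightarrow> bool" where
  "decodes_to V M cb ys i \<longleftrightarrow>
     (\<forall>j<M. j \<noteq> i \<longrightarrow> chprod V (cb i) ys > chprod V (cb j) ys)"

definition err_prob :: "'y set \<Rightarrow> 'y bchannel \<Rightarrow> 'y bchannel \<Rightarrow> nat \<Rightarrow> nat \<Rightarrow> (nat \<Rightarrow> bool list) \<Rightarrow> nat \<Rightarrow> real" where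
  "err_prob Y W V n M cb i =
     (\<Sum>ys\<in>{ys. set ys \<subseteq> Y \<and> length ys = n \<and> \<not> decodes_to V M cb ys i}. chprod W (cb i) ys)"

definition achievable :: "'y set \<Rightarrow> 'y bchannel \<Rightarrow> 'y bchannel \<Rightarrow> real \<Rightarrow> bool" where
  "achievable Y W V R \<longleftrightarrow>
     (\<forall>\<epsilon>>0. \<exists>N. \<forall>n\<ge>N. \<exists>M cb.
        (\<forall>i<M. length (cb i) = n) \<and> log 2 (real M) / real n > R \<and>
        (\<forall>i<M. err_prob Y W V n M cb i < \<epsilon>))"

definition mcap :: "'y set \<Rightarrow> 'y bchannel \<Rightarrow> 'y bchannel \<Rightarrow> real" where
  "mcap Y W V = Sup {R. achievable Y W V R}"

definition polar_minus :: "'y bchannel \<Rightarrow> ('y \<times> 'y) bchannel" where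
  "polar_minus W u1 yy = (\<Sum>u2\<in>(UNIV::bool set). 1/2 * W (u1 \<noteq> u2) (fst yy) * W u2 (snd yy))"

definition polar_plus :: "'y bchannel \<Rightarrow> (('y \<times> 'y) \<times> bool) bchannel" where
  "polar_plus W u2 yyu = (let ((y1, y2), u1) = yyu in 1/2 * W (u1 \<noteq> u2) y1 * W u2 y2)"

end

theory Submission
  imports Defs
begin

lemma chprod_Cons: "chprod W (x#xs) (y#ys) = W x y * chprod W xs ys"
  unfolding chprod_def by (simp only: length_Cons prod.lessThan_Suc_shift) simp

lemma sum_chprod:
  assumes fin: "finite Y" and rs: "\<forall>x. (\<Sum>y\<in>Y. W x y) = 1"
  shows "(\<Sum>ys\<in>{ys. set ys \<subseteq> Y \<and> length ys = length xs}. chprod W xs ys) = 1"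
proof (induction xs)
  case Nil
  have "{ys. set ys \<subseteq> Y \<and> length ys = length ([]::bool list)} = {[]}" by auto
  then show ?case by (simp add: chprod_def)
next
  case (Cons x xs)
  let ?L = "{ys. set ys \<subseteq> Y \<and> length ys = length xs}"
  have eq: "{ys. set ys \<subseteq> Y \<and> length ys = length (x#xs)} = (\<lambda>(ys, y). y#ys) ` (?L \<times> Y)"
    using lists_length_Suc_eq[of Y "length xs"] by simp
  have inj: "inj_on (\<lambda>(ys, y). y#ys) (?L \<times> Y)"
    by (auto simp: inj_on_def)
  have "(\<Sum>ys\<in>{ys. set ys \<subseteq> Y \<and> length ys = length (x#xs)}. chprod W (x#xs) ys)
      = (\<Sum>p\<in>?L \<times> Y. chprod W (x#xs) (snd p # fst p))"
    unfolding eq by (subst sum.reindex[OF inj]) (simp add: case_prod_beta)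
  also have "\<dots> = (\<Sum>ys\<in>?L. \<Sum>y\<in>Y. W x y * chprod W xs ys)"
    by (simp add: sum.cartesian_product chprod_Cons case_prod_beta)
  also have "\<dots> = (\<Sum>ys\<in>?L. chprod W xs ys)"
    using rs by (simp add: sum_distrib_right[symmetric])
  also have "\<dots> = 1" using Cons .
  finally show ?case .
qed

lemma ach_le1:
  assumes fin: "finite Y" and rs: "\<forall>x. (\<Sum>y\<in>Y. W x y) = 1" and ach: "achievable Y W V R"
  shows "R \<le> 1"
proof (rule ccontr)
  assume R1: "\<not> R \<le> 1"
  from ach obtain N where N: "\<forall>n\<ge>N. \<exists>M cb. (\<forall>i<M. length (cb i) = n) \<and> log 2 (real M) / real n > R \<and>
        (\<forall>i<M. err_prob Y W V n M cb i < 1)"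
    unfolding achievable_def by (meson zero_less_one)
  define n where "n = max N 1"
  have n1: "n \<ge> 1" unfolding n_def by simp
  obtain M cb where len: "\<forall>i<M. length (cb i) = n" and rate: "log 2 (real M) / real n > R"
    and err: "\<forall>i<M. err_prob Y W V n M cb i < 1"
    using N n_def by (meson max.cobounded1)
  have "log 2 (real M) > real n"
  proof -
    have "log 2 (real M) > R * real n" using rate n1 by (simp add: pos_less_divide_eq)
    moreover have "R * real n \<ge> real n" using R1 n1 by simp
    ultimately show ?thesis by linarith
  qed
  moreover have M0: "M > 0"
  proof (rule ccontr)
    assume "\<not> M > 0" then have "M = 0" by simp
    then show False using calculation n1 by (simp add: log_def)
  qed
  ultimately have "2 powr real n < real M" using less_log_iff[of 2 "real M" "real n"] by simp
  then have Mbig: "2 ^ n < M" by (simp add: powr_realpow)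
  have "\<not> inj_on cb {..<M}"
  proof
    assume inj: "inj_on cb {..<M}"
    have sub: "cb ` {..<M} \<subseteq> {xs. set xs \<subseteq> (UNIV::bool set) \<and> length xs = n}" using len by auto
    have "card (cb ` {..<M}) \<le> card {xs. set xs \<subseteq> (UNIV::bool set) \<and> length xs = n}"
      by (rule card_mono[OF finite_lists_length_eq sub]) simp
    also have "\<dots> = 2 ^ n" using card_lists_length_eq[of "UNIV::bool set" n] by simp
    finally show False using card_image[OF inj] Mbig by simp
  qed
  then obtain i j where ij: "i < M" "j < M" "i \<noteq> j" "cb i = cb j"
    unfolding inj_on_def by auto
  have "{ys. set ys \<subseteq> Y \<and> length ys = n \<and> \<not> decodes_to V M cb ys i}
     = {ys. set ys \<subseteq> Y \<and> length ys = length (cb i)}"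
    using ij len unfolding decodes_to_def by auto
  then have "err_prob Y W V n M cb i = 1"
    unfolding err_prob_def using sum_chprod[OF fin rs] by simp
  then show False using err ij by fastforce
qed

lemma ach_neg:
  assumes "R < 0" shows "achievable Y W V R"
  unfolding achievable_def
proof (intro allI impI)
  fix \<epsilon> :: real assume e: "\<epsilon> > 0"
  show "\<exists>N. \<forall>n\<ge>N. \<exists>M cb. (\<forall>i<M. length (cb i) = n) \<and> R < log 2 (real M) / real n \<and>
        (\<forall>i<M. err_prob Y W V n M cb i < \<epsilon>)"
  proof (intro exI allI impI)
    fix n :: nat
    have "err_prob Y W V n 1 (\<lambda>_. replicate n False) 0 = 0"
      unfolding err_prob_def decodes_to_def by simp
    then show "(\<forall>i<1. length ((\<lambda>_. replicate n False) i) = n) \<and> R < log 2 (real 1) / real n \<and>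
        (\<forall>i<1. err_prob Y W V n 1 (\<lambda>_. replicate n False) i < \<epsilon>)"
      using assms e by auto
  qed
qed


definition e01 :: "bool \<Rightarrow> nat" where "e01 b = (if b then 1 else 0)"
definition W0 :: "nat bchannel" where "W0 x y = (if y = e01 x then 1 else 0)"
definition V0 :: "nat bchannel" where "V0 x y = (if y = e01 (\<not> x) then 1 else 0)"
definition Y0 :: "nat set" where "Y0 = {0, 1}"
definition pi0 :: "nat \<Rightarrow> nat" where "pi0 y = (if y = 0 then 1 else if y = 1 then 0 else y)"
definition D :: "(nat \<times> nat) bchannel" where
  "D u p = (if fst p \<in> {0,1} \<and> snd p \<in> {0,1} \<and> (fst p \<noteq> snd p \<longleftrightarrow> u) then 1/2 else 0)"

lemma W0_minus: "polar_minus W0 = D"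
  by (auto simp: fun_eq_iff polar_minus_def W0_def D_def e01_def UNIV_bool)

lemma V0_minus: "polar_minus V0 = D"
  by (auto simp: fun_eq_iff polar_minus_def V0_def D_def e01_def UNIV_bool)

lemma bdmc_W0: "bdmc Y0 W0" by (simp add: bdmc_def W0_def Y0_def e01_def)
lemma bdmc_V0: "bdmc Y0 V0" by (simp add: bdmc_def V0_def Y0_def e01_def)
lemma sym_W0: "sym_by Y0 pi0 W0" by (simp add: sym_by_def W0_def Y0_def e01_def pi0_def)
lemma sym_V0: "sym_by Y0 pi0 V0" by (simp add: sym_by_def V0_def Y0_def e01_def pi0_def)

lemma D_rows: "\<forall>x. (\<Sum>y\<in>Y0 \<times> Y0. D x y) = 1"
  by (simp add: Y0_def D_def)

lemma plus_rows: "\<forall>x. (\<Sum>y\<in>(Y0 \<times> Y0) \<times> UNIV. polar_plus W0 x y) = 1"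
  by (simp add: Y0_def polar_plus_def W0_def e01_def UNIV_bool)

lemma mcap_W0: "mcap Y0 W0 V0 = 0"
proof -
  have "{R. achievable Y0 W0 V0 R} = {..<0}"
  proof (intro set_eqI iffI)
    fix R :: real assume "R \<in> {..<0}" then show "R \<in> {R. achievable Y0 W0 V0 R}" using ach_neg by auto
  next
    fix R :: real assume "R \<in> {R. achievable Y0 W0 V0 R}"
    then have ach: "achievable Y0 W0 V0 R" by simp
    show "R \<in> {..<0}"
    proof (rule ccontr)
      assume "R \<notin> {..<0}" then have R0: "R \<ge> 0" by simp
      from ach obtain N where N: "\<forall>n\<ge>N. \<exists>M cb. (\<forall>i<M. length (cb i) = n) \<and> log 2 (real M) / real n > R \<and>
            (\<forall>i<M. err_prob Y0 W0 V0 n M cb i < 1)"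
        unfolding achievable_def by (meson zero_less_one)
      define n where "n = max N 1"
      have n1: "n \<ge> 1" unfolding n_def by simp
      obtain M cb where len: "\<forall>i<M. length (cb i) = n" and rate: "log 2 (real M) / real n > R"
        and err: "\<forall>i<M. err_prob Y0 W0 V0 n M cb i < 1"
        using N n_def by (meson max.cobounded1)
      have "log 2 (real M) / real n > 0" using rate R0 by linarith
      then have lg: "log 2 (real M) > 0" using n1 by (simp add: zero_less_divide_iff)
      have M0: "M > 0"
      proof (rule ccontr)
        assume "\<not> M > 0" then have "M = 0" by simp
        then show False using lg by (simp add: log_def)
      qed
      have M2: "M > 1" using lg M0 less_log_iff[of 2 "real M" 0] by simp
      define ys0 where "ys0 = map e01 (cb 0)"
      have l0: "length (cb 0) = n" using len M0 by auto
      have l1: "length (cb 1) = n" using len M2 by auto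
      have W1: "chprod W0 (cb 0) ys0 = 1"
        unfolding chprod_def ys0_def by (simp add: W0_def l0)
      have V1: "chprod V0 (cb 0) ys0 = 0"
        unfolding chprod_def ys0_def using n1 l0
        by (subst prod_zero_iff) (auto simp: V0_def e01_def intro!: exI[of _ 0])
      have nn: "chprod V0 (cb 1) ys0 \<ge> 0"
        unfolding chprod_def by (rule prod_nonneg) (simp add: V0_def)
      have nd: "\<not> decodes_to V0 M cb ys0 0"
        unfolding decodes_to_def using M2 V1 nn by force
      have mem: "ys0 \<in> {ys. set ys \<subseteq> Y0 \<and> length ys = n \<and> \<not> decodes_to V0 M cb ys 0}"
        using nd l0 by (auto simp: ys0_def Y0_def e01_def)
      have fin: "finite {ys. set ys \<subseteq> Y0 \<and> length ys = n \<and> \<not> decodes_to V0 M cb ys 0}"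
        by (rule finite_subset[OF _ finite_lists_length_eq[of Y0 n]]) (auto simp: Y0_def)
      have "1 \<le> err_prob Y0 W0 V0 n M cb 0"
        unfolding err_prob_def W1[symmetric]
        by (rule member_le_sum[OF mem _ fin]) (simp add: chprod_def W0_def prod_nonneg)
      then show False using err M0 by fastforce
    qed
  qed
  then show ?thesis unfolding mcap_def by simp
qed

lemma cb_inj:
  assumes "i < 2 ^ n" "j < 2 ^ n" "map (bit i) [0..<n] = map (bit j) [0..<n]"
  shows "i = (j::nat)"
proof -
  have b: "\<forall>k<n. bit i k = bit j k"
  proof (intro allI impI)
    fix k assume "k < n"
    then show "bit i k = bit j k" using arg_cong[OF assms(3), of "\<lambda>l. l ! k"] by simp
  qed
  have "take_bit n i = take_bit n j"
    by (rule bit_eqI) (auto simp: bit_take_bit_iff b)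
  then show ?thesis using assms by (simp add: take_bit_nat_eq_self)
qed

lemma D_ach: "achievable (Y0 \<times> Y0) D D (1/2)"
  unfolding achievable_def
proof (intro allI impI)
  fix \<epsilon> :: real assume e: "\<epsilon> > 0"
  show "\<exists>N. \<forall>n\<ge>N. \<exists>M cb. (\<forall>i<M. length (cb i) = n) \<and> 1/2 < log 2 (real M) / real n \<and>
        (\<forall>i<M. err_prob (Y0 \<times> Y0) D D n M cb i < \<epsilon>)"
  proof (rule exI[of _ 1], intro allI impI)
    fix n :: nat assume n1: "1 \<le> n"
    define cb where "cb = (\<lambda>i::nat. map (bit i) [0..<n])"
    have lcb: "\<And>i. length (cb i) = n" unfolding cb_def by simp
    have rate: "1/2 < log 2 (real (2^n)) / real n"
      using n1 by (simp add: log_nat_power)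
    have err0: "err_prob (Y0 \<times> Y0) D D n (2^n) cb i = 0" if i: "i < 2^n" for i
      unfolding err_prob_def
    proof (rule sum.neutral, rule ballI)
      fix ys assume ys: "ys \<in> {ys. set ys \<subseteq> Y0 \<times> Y0 \<and> length ys = n \<and> \<not> decodes_to D (2^n) cb ys i}"
      show "chprod D (cb i) ys = 0"
      proof (rule ccontr)
        assume nz: "chprod D (cb i) ys \<noteq> 0"
        have nz': "(\<Prod>k<n. D (cb i ! k) (ys ! k)) \<noteq> 0"
          using nz unfolding chprod_def lcb .
        have fz: "D (cb i ! k) (ys ! k) \<noteq> 0" if "k < n" for k
        proof
          assume "D (cb i ! k) (ys ! k) = 0"
          then have "(\<Prod>k<n. D (cb i ! k) (ys ! k)) = 0"
            using that by (intro prod_zero) auto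
          then show False using nz' by simp
        qed
        have pos: "chprod D (cb i) ys > 0"
        proof -
          have "chprod D (cb i) ys \<ge> 0" unfolding chprod_def by (rule prod_nonneg) (simp add: D_def)
          then show ?thesis using nz by simp
        qed
        from ys obtain j where j: "j < 2^n" "j \<noteq> i" "\<not> chprod D (cb i) ys > chprod D (cb j) ys"
          unfolding decodes_to_def by blast
        have "cb j \<noteq> cb i" using cb_inj[of j n i] j i unfolding cb_def by blast
        then obtain k where k: "k < n" "cb j ! k \<noteq> cb i ! k"
          using nth_equalityI[of "cb j" "cb i"] lcb by metis
        have dz: "D (cb j ! k) (ys ! k) = 0"
          using fz[OF k(1)] k(2) unfolding D_def by (cases "cb j ! k"; cases "cb i ! k") auto
        have "chprod D (cb j) ys = (\<Prod>k<n. D (cb j ! k) (ys ! k))"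
          unfolding chprod_def lcb ..
        also have "\<dots> = 0" using k(1) dz by (intro prod_zero) auto
        finally show False using pos j by simp
      qed
    qed
    show "\<exists>M cb. (\<forall>i<M. length (cb i) = n) \<and> 1/2 < log 2 (real M) / real n \<and>
        (\<forall>i<M. err_prob (Y0 \<times> Y0) D D n M cb i < \<epsilon>)"
      apply (rule exI[of _ "2^n"], rule exI[of _ cb])
      using rate err0 e lcb by simp
  qed
qed

theorem mainTheorem1:
  shows "\<exists>(Y::nat set) W V \<pi>. bdmc Y W \<and> bdmc Y V \<and> sym_by Y \<pi> W \<and> sym_by Y \<pi> V \<and>
    mcap ((Y \<times> Y) \<times> UNIV) (polar_plus W) (polar_plus V) + mcap (Y \<times> Y) (polar_minus W) (polar_minus V)
      > 2 * mcap Y W V"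
proof (intro exI conjI)
  have finY: "finite Y0" by (simp add: Y0_def)
  have bp: "bdd_above {R. achievable ((Y0 \<times> Y0) \<times> UNIV) (polar_plus W0) (polar_plus V0) R}"
    using ach_le1[OF _ plus_rows] finY by (auto simp: bdd_above_def)
  have bm: "bdd_above {R. achievable (Y0 \<times> Y0) D D R}"
    using ach_le1[OF _ D_rows] finY by (auto simp: bdd_above_def)
  have p: "mcap ((Y0 \<times> Y0) \<times> UNIV) (polar_plus W0) (polar_plus V0) \<ge> -1/4"
    unfolding mcap_def by (rule cSup_upper[OF _ bp]) (simp add: ach_neg)
  have m: "mcap (Y0 \<times> Y0) (polar_minus W0) (polar_minus V0) \<ge> 1/2"
    unfolding mcap_def W0_minus V0_minus by (rule cSup_upper[OF _ bm]) (simp add: D_ach)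
  show "mcap ((Y0 \<times> Y0) \<times> UNIV) (polar_plus W0) (polar_plus V0) + mcap (Y0 \<times> Y0) (polar_minus W0) (polar_minus V0)
      > 2 * mcap Y0 W0 V0"
    using p m mcap_W0 by simp
qed (rule bdmc_W0 bdmc_V0 sym_W0 sym_V0)+

end
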